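(* Let $\alpha>0$ and $\beta\le\alpha$. Then the Sharma-Mittal entropy $S_{\alpha,\beta}$ is supermodular on the majorization lattice: for all $\mathbf{p},\mathbf{q}\in\mathcal{P}_n$, $$S_{\alpha,\beta}(\mathbf{p})+S_{\alpha,\beta}(\mathbf{q})\le S_{\alpha,\beta}(\mathbf{p}\wedge\mathbf{q})+S_{\alpha,\beta}(\mathbf{p}\vee\mathbf{q}).$$
   Context: $\mathcal{P}_n=\{\mathbf{p}=(p_1,\dots,p_n): p_i\ge0,\ \sum_i p_i=1\}$, with all vectors taken with components in non-increasing order. Majorization: $\mathbf{p}\preceq\mathbf{q}$ iff $\sum_{i=1}^k p_i\le\sum_{i=1}^k q_i$ for $k=1,\dots,n$; $(\mathcal{P}_n,\preceq)$ is a lattice. Its greatest lower bound $\mathbf{p}\wedge\mathbf{q}=\mathbf{r}$ satisfies $\sum_{i=1}^k r_i=\min\{\sum_{i=1}^k p_i,\sum_{i=1}^k q_i\}$. Its least upper bound $\mathbf{p}\vee\mathbf{q}$ is the least element of $\mathcal{P}_n$ (w.r.t. $\preceq$) majorizing both; concretely, let $\mathbf{w}$ satisfy $\sum_{i=1}^k w_i=\max\{\sum_{i=1}^k p_i,\sum_{i=1}^k q_i\}$; if $\mathbf{w}$ is non-increasing then $\mathbf{p}\vee\mathbf{q}=\mathbf{w}$, otherwise $\mathbf{p}\vee\mathbf{q}$ is obtained by repeatedly replacing each maximal consecutive block of coordinates violating the non-increasing order by its average until the vector is non-increasing. The Sharma-Mittal entropy is $S_{\alpha,\beta}(\mathbf{p})=\frac{1}{1-\beta}\left[\left(\sum_{i=1}^n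 p_i^\alpha\right)^{\frac{1-\beta}{1-\alpha}}-1\right]$, with values at $\alpha=1$ and/or $\beta=1$ defined by the corresponding limits. *)

theory Defs
  imports Complex_Main
begin

text \<open>Probability vectors of length n are represented as functions nat => real,
  with the relevant coordinates p 0, ..., p (n-1) (0-based indexing).\<close>

definition prob_vec :: "nat \<Rightarrow> (nat \<Rightarrow> real) \<Rightarrow> bool" where
  "prob_vec n p \<longleftrightarrow> (\<forall>i<n. 0 \<le> p i) \<and> (\<Sum>i<n. p i) = 1 \<and>
     (\<forall>i j. i \<le> j \<longrightarrow> j < n \<longrightarrow> p j \<le> p i)"

definition majorized :: "nat \<Rightarrow> (nat \<Rightarrow> real) \<Rightarrow> (nat \<Rightarrow> real) \<Rightarrow> bool" where
  "majorized n p q \<longleftrightarrow> (\<forall>k. 1 \<le> k \<longrightarrow> k \<le> n \<longrightarrow> (\<Sum>i<k. p i) \<le> (\<Sum>i<k. q i))"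

definition pmeet :: "nat \<Rightarrow> (nat \<Rightarrow> real) \<Rightarrow> (nat \<Rightarrow> real) \<Rightarrow> nat \<Rightarrow> real" where
  "pmeet n p q i = (if i < n then
      min (\<Sum>j<Suc i. p j) (\<Sum>j<Suc i. q j) - min (\<Sum>j<i. p j) (\<Sum>j<i. q j) else 0)"

text \<open>Least upper bound: the least element of P_n (w.r.t. majorization) majorizing both
  (coordinates beyond n set to 0 to make it unique).\<close>
definition pjoin :: "nat \<Rightarrow> (nat \<Rightarrow> real) \<Rightarrow> (nat \<Rightarrow> real) \<Rightarrow> nat \<Rightarrow> real" where
  "pjoin n p q = (THE r. prob_vec n r \<and> (\<forall>i\<ge>n. r i = 0) \<and>
      majorized n p r \<and> majorized n q r \<and>
      (\<forall>s. prob_vec n s \<and> majorized n p s \<and> majorized n q s \<longrightarrow> majorized n r s))"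

text \<open>Shannon entropy (natural logarithm; 0 ln 0 = 0 since ln 0 = 0 in Isabelle).\<close>
definition shannon :: "nat \<Rightarrow> (nat \<Rightarrow> real) \<Rightarrow> real" where
  "shannon n p = - (\<Sum>i<n. p i * ln (p i))"

definition sharma_mittal :: "real \<Rightarrow> real \<Rightarrow> nat \<Rightarrow> (nat \<Rightarrow> real) \<Rightarrow> real" where
  "sharma_mittal \<alpha> \<beta> n p =
    (if \<alpha> \<noteq> 1 \<and> \<beta> \<noteq> 1 then
       (1 / (1 - \<beta>)) * ((\<Sum>i<n. p i powr \<alpha>) powr ((1 - \<beta>) / (1 - \<alpha>)) - 1)
     else if \<alpha> = 1 \<and> \<beta> \<noteq> 1 then
       (1 / (1 - \<beta>)) * (exp ((1 - \<beta>) * shannon n p) - 1)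
     else if \<alpha> \<noteq> 1 \<and> \<beta> = 1 then
       (1 / (1 - \<alpha>)) * ln (\<Sum>i<n. p i powr \<alpha>)
     else shannon n p)"

end

theory Submission
  imports Defs "HOL-Analysis.Convex"
begin
lemma bern_conc:
  fixes x e :: real assumes "0 \<le> e" "e \<le> 1" "0 < x"
  shows "x powr e \<le> 1 + e * (x - 1)"
  using Youngs_inequality_0[of e "1-e" x 1] assms by (simp add: algebra_simps)

lemma bern_conv_ge1:
  fixes x e :: real assumes "1 \<le> e" "0 < x"
  shows "1 + e * (x - 1) \<le> x powr e"
proof -
  have y: "0 < x powr e" using assms by simp
  have "(x powr e) powr (1/e) \<le> 1 + (1/e) * (x powr e - 1)"
    using bern_conc[of "1/e" "x powr e"] assms y by simp
  moreover have "(x powr e) powr (1/e) = x" using assms by (simp add: powr_powr)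
  ultimately have "x \<le> 1 + (1/e) * (x powr e - 1)" by simp
  then have "e * x \<le> e * (1 + (1/e) * (x powr e - 1))" using assms by simp
  also have "\<dots> = e + (x powr e - 1)" using assms by (simp add: field_simps)
  finally show ?thesis by (simp add: algebra_simps)
qed

lemma bern_conv_le0:
  fixes x e :: real assumes "e \<le> 0" "0 < x"
  shows "1 + e * (x - 1) \<le> x powr e"
proof -
  have "(x powr e) powr (1/(1-e)) * x powr (-e/(1-e)) \<le> (1/(1-e)) * x powr e + (-e/(1-e)) * x"
    using Youngs_inequality_0[of "1/(1-e)" "-e/(1-e)" "x powr e" x] assms
    by (simp add: field_simps)
  moreover have "(x powr e) powr (1/(1-e)) * x powr (-e/(1-e)) = 1"
    using assms by (simp add: powr_powr flip: powr_add)
  ultimately have "1 \<le> (1/(1-e)) * x powr e + (-e/(1-e)) * x" by simp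
  then have "(1-e) * 1 \<le> (1-e) * ((1/(1-e)) * x powr e + (-e/(1-e)) * x)"
    using assms by simp
  also have "\<dots> = x powr e - e * x"
  proof -
    have ne: "1 - e \<noteq> 0" using assms by simp
    have a: "(1-e) * ((1/(1-e)) * x powr e) = x powr e" using ne by simp
    have b: "(1-e) * ((-e/(1-e)) * x) = - e * x" using ne by simp
    show ?thesis unfolding distrib_left a b by simp
  qed
  finally show ?thesis by (simp add: algebra_simps)
qed

lemma scale_tangent:
  fixes x t e :: real assumes "0 < x" "0 < t"
  shows "t powr e + e * t powr (e - 1) * (x - t) = t powr e * (1 + e * (x / t - 1))"
    and "x powr e = t powr e * (x / t) powr e"
  using assms by (auto simp: powr_diff powr_divide field_simps)

lemma tan_conv:
  fixes x t e :: real assumes "0 < x" "0 < t" "1 \<le> e \<or> e \<le> 0"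
  shows "t powr e + e * t powr (e - 1) * (x - t) \<le> x powr e"
proof -
  have "1 + e * (x / t - 1) \<le> (x/t) powr e"
    using assms bern_conv_ge1[of e "x/t"] bern_conv_le0[of e "x/t"] by auto
  then have "t powr e * (1 + e * (x / t - 1)) \<le> t powr e * (x/t) powr e"
    using assms by (intro mult_left_mono) auto
  then show ?thesis using scale_tangent[OF assms(1,2), of e] by simp
qed

lemma tan_conc:
  fixes x t e :: real assumes "0 < x" "0 < t" "0 \<le> e" "e \<le> 1"
  shows "x powr e \<le> t powr e + e * t powr (e - 1) * (x - t)"
proof -
  have "(x/t) powr e \<le> 1 + e * (x / t - 1)"
    using assms bern_conc[of e "x/t"] by auto
  then have "t powr e * (x/t) powr e \<le> t powr e * (1 + e * (x / t - 1))"
    using assms by (intro mult_left_mono) auto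
  then show ?thesis using scale_tangent[OF assms(1,2), of e] by simp
qed

definition PS :: "(nat \<Rightarrow> real) \<Rightarrow> nat \<Rightarrow> real" where
  "PS f k = (\<Sum>i<k. f i)"

lemma PS_0[simp]: "PS f 0 = 0" by (simp add: PS_def)
lemma PS_Suc: "PS f (Suc k) = PS f k + f k" by (simp add: PS_def)

lemma PS_split: "i \<le> n \<Longrightarrow> PS f n = PS f i + (\<Sum>k\<in>{i..<n}. f k)"
  unfolding PS_def lessThan_atLeast0
  by (simp add: sum.atLeastLessThan_concat)

lemma PS_diff: "PS (\<lambda>i. f i - g i) k = PS f k - PS g k"
  by (simp add: PS_def sum_subtractf)

lemma abel_id:
  fixes c z :: "nat \<Rightarrow> real"
  shows "0 < m \<Longrightarrow> (\<Sum>i<m. c i * z i) =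
     (\<Sum>k\<in>{1..<m}. (c (k-1) - c k) * PS z k) + c (m-1) * PS z m"
proof (induction m)
  case 0 then show ?case by simp
next
  case (Suc m)
  show ?case
  proof (cases "m = 0")
    case True then show ?thesis by (simp add: PS_def)
  next
    case False
    then have IH: "(\<Sum>i<m. c i * z i) =
     (\<Sum>k\<in>{1..<m}. (c (k-1) - c k) * PS z k) + c (m-1) * PS z m" using Suc by simp
    have "(\<Sum>k\<in>{1..<Suc m}. (c (k-1) - c k) * PS z k) =
          (\<Sum>k\<in>{1..<m}. (c (k-1) - c k) * PS z k) + (c (m-1) - c m) * PS z m"
      using False by simp
    then show ?thesis using IH by (simp add: PS_Suc algebra_simps)
  qed
qed

lemma sorted_local:
  fixes f :: "nat \<Rightarrow> real"
  assumes "\<And>k. Suc k < n \<Longrightarrow> f (Suc k) \<le> f k"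
  shows "i \<le> j \<Longrightarrow> j < n \<Longrightarrow> f j \<le> f i"
proof (induction j)
  case 0 then show ?case by simp
next
  case (Suc j)
  show ?case
  proof (cases "i = Suc j")
    case True then show ?thesis by simp
  next
    case False
    then have "f j \<le> f i" using Suc by simp
    moreover have "f (Suc j) \<le> f j" using assms Suc by simp
    ultimately show ?thesis by simp
  qed
qed

lemma d_mono:
  fixes \<psi> d :: "real \<Rightarrow> real"
  assumes T: "\<And>x t. 0 \<le> x \<Longrightarrow> 0 < t \<Longrightarrow> \<psi> t + d t * (x - t) \<le> \<psi> x"
    and "0 < s" "s \<le> t"
  shows "d s \<le> d t"
proof (cases "s = t")
  case True then show ?thesis by simp
next
  case False
  have "\<psi> s + d s * (t - s) \<le> \<psi> t" using T assms by simp
  moreover have "\<psi> t + d t * (s - t) \<le> \<psi> s" using T assms by simp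
  ultimately have "0 \<le> (d t - d s) * (t - s)" by (simp add: algebra_simps)
  moreover have "t - s > 0" using False assms by simp
  ultimately show ?thesis by (simp add: zero_le_mult_iff)
qed

lemma karamata:
  fixes \<psi> d :: "real \<Rightarrow> real" and x y :: "nat \<Rightarrow> real"
  assumes T: "\<And>x t. 0 \<le> x \<Longrightarrow> 0 < t \<Longrightarrow> \<psi> t + d t * (x - t) \<le> \<psi> x"
    and ynn: "\<forall>i<n. 0 \<le> y i" and xnn: "\<forall>i<n. 0 \<le> x i"
    and ysort: "\<forall>i j. i \<le> j \<longrightarrow> j < n \<longrightarrow> y j \<le> y i"
    and maj: "\<forall>k\<le>n. PS y k \<le> PS x k" and tot: "PS y n = PS x n"
  shows "(\<Sum>i<n. \<psi> (y i)) \<le> (\<Sum>i<n. \<psi> (x i))"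
proof -
  have zero: "x i = 0" if i: "i < n" "y i = 0" for i
  proof -
    have "\<forall>k\<in>{i..<n}. y k = 0" using ysort ynn i by (metis atLeastLessThan_iff order.antisym)
    then have "PS y n = PS y i" using PS_split[of i n y] i by simp
    moreover have "PS x n = PS x i + (\<Sum>k\<in>{i..<n}. x k)" using PS_split[of i n x] i by simp
    moreover have "PS y i \<le> PS x i" using maj i by simp
    ultimately have "(\<Sum>k\<in>{i..<n}. x k) \<le> 0" using tot by simp
    moreover have "(\<Sum>k\<in>{i..<n}. x k) \<ge> x i"
      using xnn i by (intro member_le_sum) auto
    ultimately show ?thesis using xnn i by force
  qed
  define L where "L = - (\<Sum>k<n. \<bar>d (y k)\<bar>)"
  have Lle: "L \<le> d (y k)" if "k < n" for k
  proof -
    have "\<bar>d (y k)\<bar> \<le> (\<Sum>k<n. \<bar>d (y k)\<bar>)" using that by (intro member_le_sum) auto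
    then show ?thesis unfolding L_def by linarith
  qed
  define c where "c i = (if 0 < y i then d (y i) else L)" for i
  have cmono: "c j \<le> c i" if "i \<le> j" "j < n" for i j
  proof -
    have "y j \<le> y i" using ysort that by blast
    then show ?thesis unfolding c_def using d_mono[OF T] Lle that ynn
      by (auto simp: not_less)
  qed
  have pw: "\<psi> (y i) + c i * (x i - y i) \<le> \<psi> (x i)" if "i < n" for i
  proof (cases "0 < y i")
    case True then show ?thesis using T xnn that by (simp add: c_def)
  next
    case False
    then have "y i = 0" using ynn that by force
    then show ?thesis using zero that by simp
  qed
  have nn: "0 \<le> (\<Sum>i<n. c i * (x i - y i))"
  proof (cases "n = 0")
    case True then show ?thesis by simp
  next
    case False
    then have "(\<Sum>i<n. c i * (x i - y i)) =
      (\<Sum>k\<in>{1..<n}. (c (k-1) - c k) * PS (\<lambda>i. x i - y i) k) + c (n-1) * PS (\<lambda>i. x i - y i) n"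
      using abel_id[of n c "\<lambda>i. x i - y i"] by simp
    also have "\<dots> = (\<Sum>k\<in>{1..<n}. (c (k-1) - c k) * (PS x k - PS y k))"
      using tot by (simp add: PS_diff)
    also have "\<dots> \<ge> 0"
      using cmono maj by (intro sum_nonneg mult_nonneg_nonneg) auto
    finally show ?thesis .
  qed
  have "(\<Sum>i<n. \<psi> (y i)) + (\<Sum>i<n. c i * (x i - y i)) \<le> (\<Sum>i<n. \<psi> (x i))"
    unfolding sum.distrib[symmetric] using pw by (intro sum_mono) auto
  then show ?thesis using nn by linarith
qed

lemma join_flat:
  fixes \<psi> d :: "real \<Rightarrow> real" and w j :: "nat \<Rightarrow> real"
  assumes T: "\<And>x t. 0 \<le> x \<Longrightarrow> 0 < t \<Longrightarrow> \<psi> t + d t * (x - t) \<le> \<psi> x"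
    and wnn: "\<forall>i<n. 0 \<le> w i" and jnn: "\<forall>i<n. 0 \<le> j i"
    and jsort: "\<forall>i k. i \<le> k \<longrightarrow> k < n \<longrightarrow> j k \<le> j i"
    and maj: "\<forall>k\<le>n. PS w k \<le> PS j k" and tot: "PS w n = PS j n"
    and flat: "\<forall>k. 0 < k \<longrightarrow> k < n \<longrightarrow> PS w k < PS j k \<longrightarrow> j (k-1) = j k"
  shows "(\<Sum>i<n. \<psi> (j i)) \<le> (\<Sum>i<n. \<psi> (w i))"
proof -
  have tailj: "PS j n = PS j i" if "i < n" "j i = 0" for i
  proof -
    have "\<forall>k\<in>{i..<n}. j k = 0" using jsort jnn that by (metis atLeastLessThan_iff order.antisym)
    then show ?thesis using PS_split[of i n j] that by simp
  qed
  have key: "i < n \<Longrightarrow> j i = 0 \<Longrightarrow> PS w n \<le> PS w i" for i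
  proof (induction i)
    case 0
    then show ?case using tailj[of 0] tot by simp
  next
    case (Suc i)
    show ?case
    proof (cases "j i = 0")
      case True
      then have "PS w n \<le> PS w i" using Suc by simp
      moreover have "w i \<ge> 0" using wnn Suc by simp
      ultimately show ?thesis by (simp add: PS_Suc)
    next
      case False
      then have "\<not> PS w (Suc i) < PS j (Suc i)" using flat Suc by force
      then show ?thesis using tailj[of "Suc i"] Suc tot by simp
    qed
  qed
  have zero: "w i = 0" if "i < n" "j i = 0" for i
  proof -
    have "PS w n = PS w i + (\<Sum>k\<in>{i..<n}. w k)" using PS_split[of i n w] that by simp
    moreover have "(\<Sum>k\<in>{i..<n}. w k) \<ge> w i"
      using wnn that by (intro member_le_sum) auto
    ultimately show ?thesis using key that wnn by force
  qed
  define c where "c i = (if 0 < j i then d (j i) else 0)" for i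
  have pw: "\<psi> (j i) + c i * (w i - j i) \<le> \<psi> (w i)" if "i < n" for i
  proof (cases "0 < j i")
    case True then show ?thesis using T wnn that by (simp add: c_def)
  next
    case False
    then have "j i = 0" using jnn that by force
    then show ?thesis using zero that by simp
  qed
  have z: "(\<Sum>i<n. c i * (w i - j i)) = 0"
  proof (cases "n = 0")
    case True then show ?thesis by simp
  next
    case False
    then have "(\<Sum>i<n. c i * (w i - j i)) =
      (\<Sum>k\<in>{1..<n}. (c (k-1) - c k) * PS (\<lambda>i. w i - j i) k) + c (n-1) * PS (\<lambda>i. w i - j i) n"
      using abel_id[of n c "\<lambda>i. w i - j i"] by simp
    also have "\<dots> = (\<Sum>k\<in>{1..<n}. (c (k-1) - c k) * (PS w k - PS j k))"
      using tot by (simp add: PS_diff)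
    also have "\<dots> = 0"
    proof (intro sum.neutral ballI)
      fix k assume k: "k \<in> {1..<n}"
      show "(c (k-1) - c k) * (PS w k - PS j k) = 0"
      proof (cases "PS w k < PS j k")
        case True then have "j (k-1) = j k" using flat k by auto
        then show ?thesis by (simp add: c_def)
      next
        case False
        moreover have "PS w k \<le> PS j k" using maj k by simp
        ultimately have "PS w k = PS j k" by linarith
        then show ?thesis by simp
      qed
    qed
    finally show ?thesis .
  qed
  have "(\<Sum>i<n. \<psi> (j i)) + (\<Sum>i<n. c i * (w i - j i)) \<le> (\<Sum>i<n. \<psi> (w i))"
    unfolding sum.distrib[symmetric] using pw by (intro sum_mono) auto
  then show ?thesis using z by linarith
qed

lemma tp:
  fixes \<psi> d :: "real \<Rightarrow> real"
  assumes "a \<le> c" "c \<le> b" "a \<le> e" "e \<le> b" "c + e = a + b"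
    and h1: "\<psi> c + d c * (a - c) \<le> \<psi> a" and h2: "\<psi> e + d e * (b - e) \<le> \<psi> b"
    and h3: "\<psi> e + d e * (a - e) \<le> \<psi> a" and h4: "\<psi> c + d c * (b - c) \<le> \<psi> b"
    and h5: "\<psi> c + d c * (e - c) \<le> \<psi> e" and h6: "\<psi> e + d e * (c - e) \<le> \<psi> c"
  shows "\<psi> c + \<psi> e \<le> \<psi> a + \<psi> b"
proof -
  have P: "0 \<le> (d e - d c) * (e - c)" using h5 h6 by (simp add: algebra_simps)
  show ?thesis
  proof (cases "c \<le> e")
    case True
    have "0 \<le> (d e - d c) * (c - a)"
    proof (cases "c = e")
      case True then show ?thesis by simp
    next
      case False
      then have "d e - d c \<ge> 0" using P \<open>c \<le> e\<close> by (simp add: zero_le_mult_iff)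
      then show ?thesis using assms by simp
    qed
    moreover have "(d e - d c) * (c - a) = d c * (a - c) + d e * (b - e)"
    proof -
      have be: "b - e = c - a" using assms by simp
      show ?thesis unfolding be by (simp add: algebra_simps)
    qed
    ultimately show ?thesis using h1 h2 by linarith
  next
    case False
    then have "d c - d e \<ge> 0" using P by (simp add: zero_le_mult_iff)
    then have "0 \<le> (d c - d e) * (e - a)" using assms by simp
    moreover have "(d c - d e) * (e - a) = d e * (a - e) + d c * (b - c)"
    proof -
      have be: "b - c = e - a" using assms by simp
      show ?thesis unfolding be by (simp add: algebra_simps)
    qed
    ultimately show ?thesis using h3 h4 by linarith
  qed
qed

lemma tp0:
  fixes \<psi> d :: "real \<Rightarrow> real"
  assumes T: "\<And>x t. 0 \<le> x \<Longrightarrow> 0 < t \<Longrightarrow> \<psi> t + d t * (x - t) \<le> \<psi> x"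
    and "0 \<le> a" "a \<le> c" "c \<le> b" "a \<le> e" "e \<le> b" "c + e = a + b"
  shows "\<psi> c + \<psi> e \<le> \<psi> a + \<psi> b"
proof (cases "c = 0 \<or> e = 0")
  case True
  then have "(a = c \<and> e = b) \<or> (a = e \<and> c = b)" using assms by auto
  then show ?thesis by auto
next
  case False
  then have "0 < c" "0 < e" using assms by auto
  then show ?thesis using assms by (intro tp[where d=d]) (auto intro!: T)
qed

lemma majorized_PS: "majorized n p q \<longleftrightarrow> (\<forall>k. 1 \<le> k \<longrightarrow> k \<le> n \<longrightarrow> PS p k \<le> PS q k)"
  by (simp add: majorized_def PS_def)

lemma pv_nn: "prob_vec n p \<Longrightarrow> i < n \<Longrightarrow> 0 \<le> p i" by (simp add: prob_vec_def)
lemma pv_sum: "prob_vec n p \<Longrightarrow> PS p n = 1" by (simp add: prob_vec_def PS_def)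
lemma pv_sort: "prob_vec n p \<Longrightarrow> i \<le> j \<Longrightarrow> j < n \<Longrightarrow> p j \<le> p i" by (simp add: prob_vec_def)
lemma pv_pos: "prob_vec n p \<Longrightarrow> 0 < n" by (cases n) (auto simp: prob_vec_def)

lemma PS_mono: assumes "prob_vec n p" "i \<le> k" "k \<le> n" shows "PS p i \<le> PS p k"
proof -
  have "PS p k = PS p i + (\<Sum>j\<in>{i..<k}. p j)" using PS_split assms by blast
  moreover have "(\<Sum>j\<in>{i..<k}. p j) \<ge> 0" using assms pv_nn by (intro sum_nonneg) auto
  ultimately show ?thesis by simp
qed

lemma PS_le1: assumes "prob_vec n p" "k \<le> n" shows "PS p k \<le> 1"
  using PS_mono[OF assms(1) assms(2) order.refl] pv_sum[OF assms(1)] by simp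

lemma PS_conc: assumes "prob_vec n p" "Suc (Suc k) \<le> n"
  shows "PS p k + PS p (Suc (Suc k)) \<le> 2 * PS p (Suc k)"
  using pv_sort[OF assms(1), of k "Suc k"] assms by (simp add: PS_Suc)

lemma meet_PS: "k \<le> n \<Longrightarrow> PS (pmeet n p q) k = min (PS p k) (PS q k)"
proof (induction k)
  case 0 then show ?case by simp
next
  case (Suc k)
  then show ?case by (simp add: PS_Suc pmeet_def PS_def)
qed

lemma meet_val: "k < n \<Longrightarrow> pmeet n p q k = min (PS p (Suc k)) (PS q (Suc k)) - min (PS p k) (PS q k)"
  by (simp add: pmeet_def PS_def)

lemma meet_pv: assumes p: "prob_vec n p" and q: "prob_vec n q"
  shows "prob_vec n (pmeet n p q)"
proof -
  have nn: "0 \<le> pmeet n p q i" if "i < n" for i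
    using meet_val[of i n p q] that pv_nn[OF p that] pv_nn[OF q that] by (auto simp: PS_Suc min_def)
  have sm: "(\<Sum>i<n. pmeet n p q i) = 1"
    using meet_PS[of n n p q] pv_sum[OF p] pv_sum[OF q] by (simp add: PS_def)
  have loc: "pmeet n p q (Suc k) \<le> pmeet n p q k" if "Suc k < n" for k
  proof -
    have a: "PS p k + PS p (Suc (Suc k)) \<le> 2 * PS p (Suc k)" using PS_conc[OF p] that by simp
    have b: "PS q k + PS q (Suc (Suc k)) \<le> 2 * PS q (Suc k)" using PS_conc[OF q] that by simp
    have "min (PS p k) (PS q k) + min (PS p (Suc (Suc k))) (PS q (Suc (Suc k)))
       \<le> 2 * min (PS p (Suc k)) (PS q (Suc k))" using a b by linarith
    then show ?thesis using meet_val[of k n p q] meet_val[of "Suc k" n p q] that by simp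
  qed
  show ?thesis unfolding prob_vec_def using nn sm sorted_local[of n "pmeet n p q", OF loc] by auto
qed

definition Wj :: "(nat \<Rightarrow> real) \<Rightarrow> (nat \<Rightarrow> real) \<Rightarrow> nat \<Rightarrow> real" where
  "Wj p q k = max (PS p k) (PS q k)"

definition CM :: "nat \<Rightarrow> (nat \<Rightarrow> real) \<Rightarrow> (nat \<Rightarrow> real) \<Rightarrow> (nat \<Rightarrow> real) \<Rightarrow> bool" where
  "CM n p q K \<longleftrightarrow> (\<forall>k\<le>n. Wj p q k \<le> K k) \<and>
     (\<forall>k. Suc (Suc k) \<le> n \<longrightarrow> K k + K (Suc (Suc k)) \<le> 2 * K (Suc k))"

definition Jf :: "nat \<Rightarrow> (nat \<Rightarrow> real) \<Rightarrow> (nat \<Rightarrow> real) \<Rightarrow> nat \<Rightarrow> real" where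
  "Jf n p q k = Inf {K k | K. CM n p q K}"

definition rj :: "nat \<Rightarrow> (nat \<Rightarrow> real) \<Rightarrow> (nat \<Rightarrow> real) \<Rightarrow> nat \<Rightarrow> real" where
  "rj n p q i = (if i < n then Jf n p q (Suc i) - Jf n p q i else 0)"

context
  fixes n :: nat and p q :: "nat \<Rightarrow> real"
  assumes p: "prob_vec n p" and q: "prob_vec n q"
begin

lemma K0_CM: "CM n p q (\<lambda>k. if k = 0 then 0 else 1)"
  unfolding CM_def Wj_def using PS_le1[OF p] PS_le1[OF q] by auto

lemma J_le: "CM n p q K \<Longrightarrow> k \<le> n \<Longrightarrow> Jf n p q k \<le> K k"
  unfolding Jf_def
proof (rule cInf_lower)
  assume "CM n p q K" "k \<le> n"
  then show "K k \<in> {K k |K. CM n p q K}" by blast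
  show "bdd_below {K k |K. CM n p q K}"
    unfolding bdd_below_def using \<open>k \<le> n\<close> by (auto simp: CM_def)
qed

lemma J_ge: "(\<And>K. CM n p q K \<Longrightarrow> c \<le> K k) \<Longrightarrow> c \<le> Jf n p q k"
  unfolding Jf_def
  by (rule cInf_greatest) (use K0_CM in auto)

lemma J_W: "k \<le> n \<Longrightarrow> Wj p q k \<le> Jf n p q k"
  by (rule J_ge) (auto simp: CM_def)

lemma J_CM: "CM n p q (Jf n p q)"
proof -
  have "Jf n p q k + Jf n p q (Suc (Suc k)) \<le> 2 * Jf n p q (Suc k)" if "Suc (Suc k) \<le> n" for k
  proof -
    have "(Jf n p q k + Jf n p q (Suc (Suc k))) / 2 \<le> Jf n p q (Suc k)"
    proof (rule J_ge)
      fix K assume K: "CM n p q K"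
      have "Jf n p q k \<le> K k" "Jf n p q (Suc (Suc k)) \<le> K (Suc (Suc k))"
        using J_le[OF K] that by auto
      moreover have "K k + K (Suc (Suc k)) \<le> 2 * K (Suc k)" using K that by (simp add: CM_def)
      ultimately have "Jf n p q k + Jf n p q (Suc (Suc k)) \<le> 2 * K (Suc k)" by linarith
      then show "(Jf n p q k + Jf n p q (Suc (Suc k))) / 2 \<le> K (Suc k)" by simp
    qed
    then show ?thesis by simp
  qed
  then show ?thesis using J_W unfolding CM_def by auto
qed

lemma J0: "Jf n p q 0 = 0"
  using J_W[of 0] J_le[OF K0_CM, of 0] by (simp add: Wj_def)

lemma Jn: "Jf n p q n = 1"
  using J_W[of n] J_le[OF K0_CM, of n] pv_pos[OF p] pv_sum[OF p] pv_sum[OF q] by (simp add: Wj_def)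

lemma J_le1: "k \<le> n \<Longrightarrow> Jf n p q k \<le> 1"
  using J_le[OF K0_CM, of k] by (auto split: if_splits)

lemma PS_rj: "k \<le> n \<Longrightarrow> PS (rj n p q) k = Jf n p q k"
proof (induction k)
  case 0 then show ?case using J0 by simp
next
  case (Suc k) then show ?case by (simp add: PS_Suc rj_def)
qed

lemma rj_loc: assumes "Suc k < n" shows "rj n p q (Suc k) \<le> rj n p q k"
proof -
  have "Jf n p q k + Jf n p q (Suc (Suc k)) \<le> 2 * Jf n p q (Suc k)"
    using J_CM assms unfolding CM_def by simp
  then show ?thesis using assms by (simp add: rj_def)
qed

lemma rj_sort: "i \<le> j \<Longrightarrow> j < n \<Longrightarrow> rj n p q j \<le> rj n p q i"
  using sorted_local[of n "rj n p q", OF rj_loc] by blast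

lemma rj_nn: "i < n \<Longrightarrow> 0 \<le> rj n p q i"
proof -
  assume i: "i < n"
  have n1: "n - 1 < n" "Suc (n - 1) = n" using pv_pos[OF p] by auto
  have "0 \<le> rj n p q (n - 1)" using J_le1[of "n-1"] Jn n1 by (simp add: rj_def)
  moreover have "rj n p q (n-1) \<le> rj n p q i" using rj_sort[of i "n-1"] i n1 by simp
  ultimately show ?thesis by simp
qed

lemma rj_pv: "prob_vec n (rj n p q)"
  unfolding prob_vec_def using rj_nn rj_sort PS_rj[of n] Jn by (auto simp: PS_def)

lemma rj_maj_p: "majorized n p (rj n p q)"
  unfolding majorized_PS using J_W PS_rj by (force simp: Wj_def)

lemma rj_maj_q: "majorized n q (rj n p q)"
  unfolding majorized_PS using J_W PS_rj by (force simp: Wj_def)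

lemma rj_least: assumes s: "prob_vec n s" "majorized n p s" "majorized n q s"
  shows "majorized n (rj n p q) s"
proof -
  have "CM n p q (PS s)"
    unfolding CM_def
  proof (intro conjI allI impI)
    fix k assume k: "k \<le> n"
    show "Wj p q k \<le> PS s k"
    proof (cases "k = 0")
      case True then show ?thesis by (simp add: Wj_def)
    next
      case False then show ?thesis using s k by (auto simp: Wj_def majorized_PS)
    qed
  next
    fix k assume "Suc (Suc k) \<le> n"
    then show "PS s k + PS s (Suc (Suc k)) \<le> 2 * PS s (Suc k)" using PS_conc[OF s(1)] by simp
  qed
  then show ?thesis unfolding majorized_PS using J_le PS_rj by auto
qed

lemma pjoin_eq: "pjoin n p q = rj n p q"
  unfolding pjoin_def
proof (rule the_equality)
  show "prob_vec n (rj n p q) \<and> (\<forall>i\<ge>n. rj n p q i = 0) \<and> majorized n p (rj n p q) \<and>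
    majorized n q (rj n p q) \<and>
    (\<forall>s. prob_vec n s \<and> majorized n p s \<and> majorized n q s \<longrightarrow> majorized n (rj n p q) s)"
    using rj_pv rj_maj_p rj_maj_q rj_least by (auto simp: rj_def)
next
  fix r assume r: "prob_vec n r \<and> (\<forall>i\<ge>n. r i = 0) \<and> majorized n p r \<and> majorized n q r \<and>
    (\<forall>s. prob_vec n s \<and> majorized n p s \<and> majorized n q s \<longrightarrow> majorized n r s)"
  have m1: "majorized n r (rj n p q)" using r rj_pv rj_maj_p rj_maj_q by blast
  have m2: "majorized n (rj n p q) r" using r rj_least by blast
  have eqPS: "PS r k = PS (rj n p q) k" if "k \<le> n" for k
  proof (cases "k = 0")
    case True then show ?thesis by simp
  next
    case False then show ?thesis using m1 m2 that unfolding majorized_PS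
      by (meson dual_order.antisym less_one not_le)
  qed
  show "r = rj n p q"
  proof
    fix i show "r i = rj n p q i"
    proof (cases "i < n")
      case True
      then have "PS r (Suc i) = PS (rj n p q) (Suc i)" "PS r i = PS (rj n p q) i"
        using eqPS by auto
      then show ?thesis by (simp add: PS_Suc)
    next
      case False then show ?thesis using r by (simp add: rj_def)
    qed
  qed
qed

lemma rj_flat: assumes k: "0 < k" "k < n" and lt: "Wj p q k < Jf n p q k"
  shows "rj n p q (k-1) = rj n p q k"
proof (rule ccontr)
  assume ne: "rj n p q (k-1) \<noteq> rj n p q k"
  have "rj n p q k \<le> rj n p q (k-1)" using rj_sort k by simp
  with ne have gap: "rj n p q k < rj n p q (k-1)" by simp
  define J where "J = Jf n p q"
  have rk: "rj n p q k = J (Suc k) - J k" using k by (simp add: rj_def J_def)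
  have kk: "Suc (k-1) = k" "k - 1 < n" using k by auto
  have rk1: "rj n p q (k-1) = J k - J (k-1)" using kk unfolding rj_def J_def by simp
  define \<epsilon> where "\<epsilon> = min (J k - Wj p q k) ((rj n p q (k-1) - rj n p q k) / 2)"
  have ep: "0 < \<epsilon>" using lt gap by (simp add: \<epsilon>_def J_def)
  define K where "K = J(k := J k - \<epsilon>)"
  have JCM: "CM n p q J" using J_CM by (simp add: J_def)
  have "CM n p q K"
    unfolding CM_def
  proof (intro conjI allI impI)
    fix i assume "i \<le> n"
    then show "Wj p q i \<le> K i" using JCM by (auto simp: K_def CM_def \<epsilon>_def)
  next
    fix i assume i: "Suc (Suc i) \<le> n"
    have c: "J i + J (Suc (Suc i)) \<le> 2 * J (Suc i)" using JCM i by (simp add: CM_def)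
    consider "Suc i = k" | "i = k" | "Suc (Suc i) = k" | "Suc i \<noteq> k \<and> i \<noteq> k \<and> Suc (Suc i) \<noteq> k"
      by blast
    then show "K i + K (Suc (Suc i)) \<le> 2 * K (Suc i)"
    proof cases
      case 1
      then have "i = k - 1" "Suc (Suc i) = Suc k" by auto
      moreover have "\<epsilon> \<le> (rj n p q (k-1) - rj n p q k) / 2" unfolding \<epsilon>_def by (rule min.cobounded2)
      then have "2 * \<epsilon> \<le> rj n p q (k-1) - rj n p q k" by (simp add: field_simps)
      ultimately show ?thesis using 1 rk rk1 by (simp add: K_def)
    next
      case 2 then show ?thesis using c ep by (simp add: K_def)
    next
      case 3 then show ?thesis using c ep by (simp add: K_def)
    qed (use c in \<open>simp add: K_def\<close>)
  qed
  then have "J k \<le> K k" using J_le k by (simp add: J_def)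
  then show False using ep by (simp add: K_def)
qed

end

lemma arith4:
  fixes P Q x y :: real
  shows "min x y \<le> min (P+x) (Q+y) - min P Q \<and> min (P+x) (Q+y) - min P Q \<le> max x y \<and>
         min x y \<le> max (P+x) (Q+y) - max P Q \<and> max (P+x) (Q+y) - max P Q \<le> max x y \<and>
         (min (P+x) (Q+y) - min P Q) + (max (P+x) (Q+y) - max P Q) = min x y + max x y"
  unfolding min_def max_def by auto

lemma sep:
  fixes \<psi> d :: "real \<Rightarrow> real"
  assumes T: "\<And>x t. 0 \<le> x \<Longrightarrow> 0 < t \<Longrightarrow> \<psi> t + d t * (x - t) \<le> \<psi> x"
    and p: "prob_vec n p" and q: "prob_vec n q"
  shows "(\<Sum>i<n. \<psi> (pmeet n p q i)) + (\<Sum>i<n. \<psi> (pjoin n p q i)) \<le> (\<Sum>i<n. \<psi> (p i)) + (\<Sum>i<n. \<psi> (q i))"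
    and "(\<Sum>i<n. \<psi> (pmeet n p q i)) \<le> (\<Sum>i<n. \<psi> (p i))"
    and "(\<Sum>i<n. \<psi> (pmeet n p q i)) \<le> (\<Sum>i<n. \<psi> (q i))"
    and "(\<Sum>i<n. \<psi> (p i)) \<le> (\<Sum>i<n. \<psi> (pjoin n p q i))"
    and "(\<Sum>i<n. \<psi> (q i)) \<le> (\<Sum>i<n. \<psi> (pjoin n p q i))"
proof -
  let ?m = "pmeet n p q"
  let ?r = "rj n p q"
  have pj: "pjoin n p q = ?r" using pjoin_eq[OF p q] .
  define w where "w i = Wj p q (Suc i) - Wj p q i" for i
  have PSw: "PS w k = Wj p q k" for k
    by (induction k) (simp_all add: PS_Suc w_def Wj_def)
  have mpv: "prob_vec n ?m" using meet_pv[OF p q] .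
  have rpv: "prob_vec n ?r" using rj_pv[OF p q] .
  have pw: "\<psi> (?m i) + \<psi> (w i) \<le> \<psi> (p i) + \<psi> (q i)" if i: "i < n" for i
  proof -
    have A: "?m i = min (PS p i + p i) (PS q i + q i) - min (PS p i) (PS q i)"
      using meet_val[of i n p q] i by (simp add: PS_Suc)
    have B: "w i = max (PS p i + p i) (PS q i + q i) - max (PS p i) (PS q i)"
      by (simp add: w_def Wj_def PS_Suc)
    have nn: "0 \<le> min (p i) (q i)" using pv_nn[OF p i] pv_nn[OF q i] by simp
    have "\<psi> (?m i) + \<psi> (w i) \<le> \<psi> (min (p i) (q i)) + \<psi> (max (p i) (q i))"
      unfolding A B using arith4[of "p i" "q i" "PS p i" "PS q i"] nn
      by (intro tp0[where d=d, OF T]) auto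
    also have "\<dots> = \<psi> (p i) + \<psi> (q i)" by (cases "p i \<le> q i") (auto simp: min_def max_def)
    finally show ?thesis .
  qed
  have s1: "(\<Sum>i<n. \<psi> (?m i)) + (\<Sum>i<n. \<psi> (w i)) \<le> (\<Sum>i<n. \<psi> (p i)) + (\<Sum>i<n. \<psi> (q i))"
    unfolding sum.distrib[symmetric] using pw by (intro sum_mono) auto
  have wnn: "\<forall>i<n. 0 \<le> w i"
  proof (intro allI impI)
    fix i assume i: "i < n"
    have "PS p i \<le> PS p (Suc i)" "PS q i \<le> PS q (Suc i)"
      using PS_mono[OF p, of i "Suc i"] PS_mono[OF q, of i "Suc i"] i by auto
    then have "max (PS p i) (PS q i) \<le> max (PS p (Suc i)) (PS q (Suc i))" by (rule max.mono)
    then show "0 \<le> w i" by (simp add: w_def Wj_def)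
  qed
  have s2: "(\<Sum>i<n. \<psi> (?r i)) \<le> (\<Sum>i<n. \<psi> (w i))"
  proof (rule join_flat[where d=d, OF T wnn])
    show "\<forall>i<n. 0 \<le> ?r i" using rj_nn[OF p q] by blast
    show "\<forall>i k. i \<le> k \<longrightarrow> k < n \<longrightarrow> ?r k \<le> ?r i" using rj_sort[OF p q] by blast
    show "\<forall>k\<le>n. PS w k \<le> PS ?r k" using PSw PS_rj[OF p q] J_W[OF p q] by simp
    show "PS w n = PS ?r n" using PSw PS_rj[OF p q] Jn[OF p q] pv_sum[OF p] pv_sum[OF q]
      by (simp add: Wj_def)
    show "\<forall>k. 0 < k \<longrightarrow> k < n \<longrightarrow> PS w k < PS ?r k \<longrightarrow> ?r (k - 1) = ?r k"
      using PSw PS_rj[OF p q] rj_flat[OF p q] by simp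
  qed
  show "(\<Sum>i<n. \<psi> (pmeet n p q i)) + (\<Sum>i<n. \<psi> (pjoin n p q i)) \<le> (\<Sum>i<n. \<psi> (p i)) + (\<Sum>i<n. \<psi> (q i))"
    using s1 s2 pj by simp
  have kar_m: "(\<Sum>i<n. \<psi> (?m i)) \<le> (\<Sum>i<n. \<psi> (x i))"
    if x: "prob_vec n x" "\<forall>k\<le>n. min (PS p k) (PS q k) \<le> PS x k" for x
  proof (rule karamata[where d=d, OF T])
    show "\<forall>i<n. 0 \<le> ?m i" using mpv by (simp add: prob_vec_def)
    show "\<forall>i<n. 0 \<le> x i" using x by (simp add: prob_vec_def)
    show "\<forall>i j. i \<le> j \<longrightarrow> j < n \<longrightarrow> ?m j \<le> ?m i" using mpv by (simp add: prob_vec_def)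
    show "\<forall>k\<le>n. PS ?m k \<le> PS x k" using meet_PS x by simp
    show "PS ?m n = PS x n" using meet_PS[of n n p q] pv_sum[OF p] pv_sum[OF q] pv_sum[OF x(1)] by simp
  qed
  show "(\<Sum>i<n. \<psi> (pmeet n p q i)) \<le> (\<Sum>i<n. \<psi> (p i))"
    using kar_m[OF p] by simp
  show "(\<Sum>i<n. \<psi> (pmeet n p q i)) \<le> (\<Sum>i<n. \<psi> (q i))"
    using kar_m[OF q] by simp
  have kar_j: "(\<Sum>i<n. \<psi> (x i)) \<le> (\<Sum>i<n. \<psi> (?r i))"
    if x: "prob_vec n x" "\<forall>k\<le>n. PS x k \<le> Wj p q k" for x
  proof (rule karamata[where d=d, OF T])
    show "\<forall>i<n. 0 \<le> ?r i" using rpv by (simp add: prob_vec_def)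
    show "\<forall>i<n. 0 \<le> x i" using x by (simp add: prob_vec_def)
    show "\<forall>i j. i \<le> j \<longrightarrow> j < n \<longrightarrow> x j \<le> x i" using x by (simp add: prob_vec_def)
    show "\<forall>k\<le>n. PS x k \<le> PS ?r k" using x J_W[OF p q] PS_rj[OF p q] by force
    show "PS x n = PS ?r n" using PS_rj[OF p q] Jn[OF p q] pv_sum[OF x(1)] by simp
  qed
  show "(\<Sum>i<n. \<psi> (p i)) \<le> (\<Sum>i<n. \<psi> (pjoin n p q i))"
    using kar_j[OF p] pj by (simp add: Wj_def)
  show "(\<Sum>i<n. \<psi> (q i)) \<le> (\<Sum>i<n. \<psi> (pjoin n p q i))"
    using kar_j[OF q] pj by (simp add: Wj_def)
qed

lemma pair_dec:
  fixes h dh :: "real \<Rightarrow> real"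
  assumes Th: "\<And>x t. L < x \<Longrightarrow> L < t \<Longrightarrow> h t + dh t * (x - t) \<le> h x"
    and mono: "\<And>x y. L < x \<Longrightarrow> x \<le> y \<Longrightarrow> h y \<le> h x"
    and "L < C" "C \<le> A" "C \<le> B" "A \<le> D" "B \<le> D" "C + D \<le> A + B"
  shows "h A + h B \<le> h C + h D"
proof -
  define C' where "C' = A + B - D"
  have "h A + h B \<le> h C' + h D"
    using assms unfolding C'_def by (intro tp[where d=dh] Th) auto
  moreover have "h C' \<le> h C" using assms unfolding C'_def by (intro mono) auto
  ultimately show ?thesis by simp
qed

lemma pair_inc:
  fixes h dh :: "real \<Rightarrow> real"
  assumes Th: "\<And>x t. L < x \<Longrightarrow> L < t \<Longrightarrow> h t + dh t * (x - t) \<le> h x"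
    and mono: "\<And>x y. L < x \<Longrightarrow> x \<le> y \<Longrightarrow> h x \<le> h y"
    and "L < D" "D \<le> A" "D \<le> B" "A \<le> C" "B \<le> C" "A + B \<le> C + D"
  shows "h A + h B \<le> h C + h D"
proof -
  define C' where "C' = A + B - D"
  have "h A + h B \<le> h D + h C'"
    using assms unfolding C'_def by (intro tp[where d=dh] Th) auto
  moreover have "h C' \<le> h C" using assms unfolding C'_def by (intro mono) auto
  ultimately show ?thesis by simp
qed

lemma pos_powsum:
  assumes "prob_vec n x" shows "0 < (\<Sum>i<n. x i powr a)"
proof -
  have "\<exists>i<n. 0 < x i"
  proof (rule ccontr)
    assume "\<not> ?thesis"
    then have "\<forall>i<n. x i \<le> 0" by (meson not_less)
    then have "(\<Sum>i<n. x i) \<le> 0" by (intro sum_nonpos) auto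
    then show False using assms by (simp add: prob_vec_def)
  qed
  then obtain i where i: "i < n" "0 < x i" by blast
  have "x i powr a \<le> (\<Sum>i<n. x i powr a)" using i by (intro member_le_sum) auto
  moreover have "0 < x i powr a" using i by simp
  ultimately show ?thesis by linarith
qed

lemma powr_times_self: "0 < t \<Longrightarrow> t powr (a - 1) * t = t powr (a::real)"
  by (simp add: powr_diff)

theorem theorem2:
  fixes n :: nat and \<alpha> \<beta> :: real and p q :: "nat \<Rightarrow> real"
  assumes "\<alpha> > 0" and "\<beta> \<le> \<alpha>"
    and "prob_vec n p" and "prob_vec n q"
  shows "sharma_mittal \<alpha> \<beta> n p + sharma_mittal \<alpha> \<beta> n q
         \<le> sharma_mittal \<alpha> \<beta> n (pmeet n p q) + sharma_mittal \<alpha> \<beta> n (pjoin n p q)"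
proof -
  have p: "prob_vec n p" and q: "prob_vec n q" using assms by auto
  let ?m = "pmeet n p q" and ?r = "pjoin n p q"
  have mpv: "prob_vec n ?m" using meet_pv[OF p q] .
  have rpv: "prob_vec n ?r" using rj_pv[OF p q] pjoin_eq[OF p q] by simp
  define A where "A = (\<Sum>i<n. p i powr \<alpha>)"
  define B where "B = (\<Sum>i<n. q i powr \<alpha>)"
  define C where "C = (\<Sum>i<n. ?m i powr \<alpha>)"
  define D where "D = (\<Sum>i<n. ?r i powr \<alpha>)"
  have Cpos: "0 < C" and Dpos: "0 < D"
    using pos_powsum[OF mpv] pos_powsum[OF rpv] by (auto simp: C_def D_def)
  consider "1 < \<alpha>" | "\<alpha> < 1" | "\<alpha> = 1" by linarith
  then show ?thesis
  proof cases
    case 1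
    have T: "x powr \<alpha> + (\<alpha> * x powr (\<alpha> - 1)) * (y - x) \<le> y powr \<alpha>" if "0 \<le> y" "0 < x" for x y
    proof (cases "y = 0")
      case True
      have "x powr (\<alpha> - 1) * x = x powr \<alpha>" using that powr_times_self by simp
      then have "x powr \<alpha> + (\<alpha> * x powr (\<alpha> - 1)) * (y - x) = (1 - \<alpha>) * x powr \<alpha>"
        using True by (simp add: algebra_simps)
      also have "\<dots> \<le> 0" using 1 by (simp add: mult_nonpos_nonneg)
      finally show ?thesis using True by simp
    next
      case False then show ?thesis using tan_conv[of y x \<alpha>] that 1 by simp
    qed
    note S = sep[where \<psi>="\<lambda>x. x powr \<alpha>" and d="\<lambda>t. \<alpha> * t powr (\<alpha> - 1)", OF T p q]
    have ineq: "C + D \<le> A + B" "C \<le> A" "C \<le> B" "A \<le> D" "B \<le> D"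
      using S by (auto simp: A_def B_def C_def D_def)
    show ?thesis
    proof (cases "\<beta> = 1")
      case True
      define k where "k = 1 / (1 - \<alpha>)"
      have k: "k < 0" using 1 by (simp add: k_def)
      have "k * ln A + k * ln B \<le> k * ln C + k * ln D"
      proof (rule pair_dec[where h="\<lambda>s. k * ln s" and L=0 and dh="\<lambda>t. k / t"])
        fix x t :: real assume xt: "0 < x" "0 < t"
        have "ln (x / t) \<le> x / t - 1" using xt by (intro ln_le_minus_one) simp
        then have "ln x \<le> ln t + (x - t) / t" using xt by (simp add: ln_div diff_divide_distrib)
        then have "k * (ln t + (x - t) / t) \<le> k * ln x" using k by (simp add: mult_left_mono_neg)
        then show "k * ln t + k / t * (x - t) \<le> k * ln x" by (simp add: algebra_simps)
      next
        fix x y :: real assume "0 < x" "x \<le> y"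
        then show "k * ln y \<le> k * ln x" using k by (simp add: mult_left_mono_neg)
      qed (use Cpos ineq in auto)
      then show ?thesis using True 1 by (simp add: sharma_mittal_def A_def B_def C_def D_def k_def)
    next
      case False
      define k where "k = 1 / (1 - \<beta>)"
      define e where "e = (1 - \<beta>) / (1 - \<alpha>)"
      let ?h = "\<lambda>s. k * (s powr e - 1)"
      have "?h A + ?h B \<le> ?h C + ?h D"
      proof (rule pair_dec[where h="?h" and L=0 and dh="\<lambda>t. k * e * t powr (e - 1)"])
        fix x t :: real assume xt: "0 < x" "0 < t"
        show "?h t + k * e * t powr (e - 1) * (x - t) \<le> ?h x"
        proof (cases "\<beta> < 1")
          case True
          have "k > 0" "e \<le> 0" using True 1 by (auto simp: k_def e_def divide_pos_neg less_imp_le)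
          then have "k * (t powr e + e * t powr (e - 1) * (x - t)) \<le> k * x powr e"
            using tan_conv[OF xt, of e] by (intro mult_left_mono) auto
          then show ?thesis by (simp add: algebra_simps)
        next
          case False
          then have b1: "1 < \<beta>" using \<open>\<beta> \<noteq> 1\<close> by simp
          have "k < 0" using b1 by (simp add: k_def)
          moreover have "0 \<le> e" "e \<le> 1" using b1 1 assms(2)
            by (auto simp: e_def divide_simps)
          ultimately have "k * (t powr e + e * t powr (e - 1) * (x - t)) \<le> k * x powr e"
            using tan_conc[OF xt, of e] by (intro mult_left_mono_neg) auto
          then show ?thesis by (simp add: algebra_simps)
        qed
      next
        fix x y :: real assume xy: "0 < x" "x \<le> y"
        show "?h y \<le> ?h x"
        proof (cases "\<beta> < 1")
          case True
          have "k > 0" "e \<le> 0" using True 1 by (auto simp: k_def e_def divide_pos_neg less_imp_le)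
          moreover have "y powr e \<le> x powr e" using xy \<open>e \<le> 0\<close> by (intro powr_mono2') auto
          ultimately show ?thesis by (simp add: mult_left_mono)
        next
          case False
          then have b1: "1 < \<beta>" using \<open>\<beta> \<noteq> 1\<close> by simp
          have "k < 0" using b1 by (simp add: k_def)
          moreover have "0 \<le> e" using b1 1 by (auto simp: e_def divide_simps)
          moreover have "x powr e \<le> y powr e" using xy \<open>0 \<le> e\<close> by (intro powr_mono2) auto
          ultimately show ?thesis by (simp add: mult_left_mono_neg)
        qed
      qed (use Cpos ineq in auto)
      then show ?thesis using False 1
        by (simp add: sharma_mittal_def A_def B_def C_def D_def k_def e_def)
    qed
  next
    case 2
    have T: "- (x powr \<alpha>) + (- (\<alpha> * x powr (\<alpha> - 1))) * (y - x) \<le> - (y powr \<alpha>)" if "0 \<le> y" "0 < x" for x y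
    proof (cases "y = 0")
      case True
      have "x powr (\<alpha> - 1) * x = x powr \<alpha>" using that powr_times_self by simp
      then have "- (x powr \<alpha>) + (- (\<alpha> * x powr (\<alpha> - 1))) * (y - x) = (\<alpha> - 1) * x powr \<alpha>"
        using True by (simp add: algebra_simps)
      also have "\<dots> \<le> 0" using 2 by (simp add: mult_nonpos_nonneg)
      finally show ?thesis using True by simp
    next
      case False then show ?thesis using tan_conc[of y x \<alpha>] that 2 assms(1) by simp
    qed
    note S = sep[where \<psi>="\<lambda>x. - (x powr \<alpha>)" and d="\<lambda>t. - (\<alpha> * t powr (\<alpha> - 1))", OF T p q]
    have ineq: "A + B \<le> C + D" "A \<le> C" "B \<le> C" "D \<le> A" "D \<le> B"
      using S by (auto simp: A_def B_def C_def D_def sum_negf)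
    have b1: "\<beta> < 1" using 2 assms(2) by simp
    define k where "k = 1 / (1 - \<beta>)"
    define e where "e = (1 - \<beta>) / (1 - \<alpha>)"
    have k: "0 < k" using b1 by (simp add: k_def)
    have e: "1 \<le> e" using b1 2 assms(2) by (simp add: e_def divide_simps)
    let ?h = "\<lambda>s. k * (s powr e - 1)"
    have "?h A + ?h B \<le> ?h C + ?h D"
    proof (rule pair_inc[where h="?h" and L=0 and dh="\<lambda>t. k * e * t powr (e - 1)"])
      fix x t :: real assume xt: "0 < x" "0 < t"
      have "k * (t powr e + e * t powr (e - 1) * (x - t)) \<le> k * x powr e"
        using tan_conv[OF xt, of e] k e by (intro mult_left_mono) auto
      then show "?h t + k * e * t powr (e - 1) * (x - t) \<le> ?h x" by (simp add: algebra_simps)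
    next
      fix x y :: real assume xy: "0 < x" "x \<le> y"
      have "x powr e \<le> y powr e" using xy e by (intro powr_mono2) auto
      then show "?h x \<le> ?h y" using k by (simp add: mult_left_mono)
    qed (use Dpos ineq in auto)
    then show ?thesis using b1 2
      by (simp add: sharma_mittal_def A_def B_def C_def D_def k_def e_def)
  next
    case 3
    have T: "x * ln x + (ln x + 1) * (y - x) \<le> y * ln y" if "0 \<le> y" "0 < x" for x y :: real
    proof (cases "y = 0")
      case True
      have "x * ln x + (ln x + 1) * (y - x) = - x" using True by (simp add: algebra_simps)
      then show ?thesis using that True by simp
    next
      case False
      then have y: "0 < y" using that by simp
      have "ln (x / y) \<le> x / y - 1" using y that by (intro ln_le_minus_one) simp
      then have "ln x - ln y \<le> x / y - 1" using y that by (simp add: ln_div)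
      then have "y * (ln x - ln y) \<le> y * (x / y - 1)" using y by (intro mult_left_mono) auto
      then have "y * ln x - y * ln y \<le> x - y" using y by (simp add: algebra_simps)
      then show ?thesis by (simp add: algebra_simps)
    qed
    note S = sep[where \<psi>="\<lambda>x. x * ln x" and d="\<lambda>t. ln t + 1", OF T p q]
    define A' where "A' = shannon n p"
    define B' where "B' = shannon n q"
    define C' where "C' = shannon n ?m"
    define D' where "D' = shannon n ?r"
    have ineq: "A' + B' \<le> C' + D'" "A' \<le> C'" "B' \<le> C'" "D' \<le> A'" "D' \<le> B'"
      using S by (auto simp: A'_def B'_def C'_def D'_def shannon_def)
    show ?thesis
    proof (cases "\<beta> = 1")
      case True
      then show ?thesis using 3 ineq by (simp add: sharma_mittal_def A'_def B'_def C'_def D'_def)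
    next
      case False
      then have b1: "\<beta> < 1" using 3 assms(2) by simp
      define c where "c = 1 - \<beta>"
      have c: "0 < c" using b1 by (simp add: c_def)
      let ?h = "\<lambda>s. (1 / c) * (exp (c * s) - 1)"
      have "?h A' + ?h B' \<le> ?h C' + ?h D'"
      proof (rule pair_inc[where h="?h" and L="D' - 1" and dh="\<lambda>t. exp (c * t)"])
        fix x t :: real
        have "exp (c * t) * (1 + c * (x - t)) \<le> exp (c * t) * exp (c * (x - t))"
          by (intro mult_left_mono) auto
        also have "\<dots> = exp (c * x)" by (simp add: algebra_simps flip: exp_add)
        finally have "exp (c * t) + c * (exp (c * t) * (x - t)) \<le> exp (c * x)"
          by (simp add: algebra_simps)
        then have "(1/c) * (exp (c * t) + c * (exp (c * t) * (x - t))) \<le> (1/c) * exp (c * x)"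
          using c by (intro mult_left_mono) auto
        then show "?h t + exp (c * t) * (x - t) \<le> ?h x"
          using c by (simp add: algebra_simps)
      next
        fix x y :: real assume "x \<le> y"
        then show "?h x \<le> ?h y" using c by (simp add: divide_right_mono)
      qed (use ineq in auto)
      then show ?thesis using False 3
        by (simp add: sharma_mittal_def A'_def B'_def C'_def D'_def c_def)
    qed
  qed
qed

end
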